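(* Let $n\ge2$, and let $\rho_1,\ldots,\rho_n>0$ and $\theta>0$ be (sufficiently smooth) functions on a domain in $\mathbb{R}^3$, with $\rho=\sum_{i=1}^n\rho_i$ and $\mu_i=\theta(\log(\rho_i/\theta)+1)$. Let $b_{ij}=b_{ji}>0$ ($i\ne j$) be friction coefficients, and let $B=(B_{ij})$ be given by $B_{ii}=\sum_{j\ne i}b_{ij}\rho_j$ and $B_{ij}=-b_{ij}\rho_i$ for $j\ne i$; let $B^\#$ be the group inverse of $B$, i.e. the matrix satisfying $BB^\#=B^\#B=I-(\boldsymbol\rho/\rho)\otimes\boldsymbol1$, $\sum_jB^\#_{ij}\rho_j=0$ and $\sum_jB^\#_{ji}=0$ for all $i$. Let $P=(P_{ij})$ with $P_{ij}=\delta_{ij}-\rho_j/\rho$. Let $\bar q_1,\ldots,\bar q_n\in\mathbb{R}$ satisfy $\sum_{i=1}^n\bar q_i\rho_i=0$, and define the driving forces $$d_i=\rho_i\nabla\frac{\mu_i}{\theta}-\frac{\rho_i}{\rho\theta}\nabla(\rho\theta)-2\rho_i\theta\nabla\frac1\theta+\bar q_i\rho_i\nabla\log\theta,\quad i=1,\ldots,n.$$ Suppose that the fluxes $J_1,\ldots,J_n$ satisfy $\sum_{i=1}^nJ_i=0$ and the Maxwell–Stefan relations $d_i=-\sum_{j=1}^nb_{ij}\rho_i\rho_j\big(\frac{J_i}{\rho_i}-\frac{J_j}{\rho_j}\big)$, $i=1,\ldots,n$. Then $$J_i=-\sum_{j=1}^nM_{ij}\nabla\frac{\mu_j}{\theta}-M_i\nabla\frac1\theta,\qquad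 M_{ij}=\sum_{k=1}^nB^\#_{ik}\rho_kP_{kj},\quad M_i=-\theta\sum_{k=1}^nB^\#_{ik}\rho_k\bar q_k,$$ where the matrix $(M_{ij})$ is symmetric and $\sum_{i=1}^nM_{ij}=0$ for all $j$ and $\sum_{i=1}^nM_i=0$.
   Context: For vectors $a,b\in\mathbb{R}^n$, $(a\otimes b)_{ij}=a_ib_j$; $\boldsymbol1=(1,\ldots,1)$, $\boldsymbol\rho=(\rho_1,\ldots,\rho_n)$. Note $\nabla(\mu_j/\theta)=\nabla q_j$ with $q_j=\log(\rho_j/\theta)$ the thermo-chemical potentials, so the conclusion is the Fick–Onsager form of the fluxes. (The paper denotes the real numbers $\bar q_i$ by $q_i$; they are renamed here to avoid a clash with the thermo-chemical potentials.) *)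

theory Defs
  imports "HOL-Analysis.Analysis"
begin

definition grad :: "(real^3 \<Rightarrow> real) \<Rightarrow> real^3 \<Rightarrow> real^3" where
  "grad f x = (\<chi> k. frechet_derivative f (at x) (axis k 1))"

definition rho_tot :: "('n::finite \<Rightarrow> real^3 \<Rightarrow> real) \<Rightarrow> real^3 \<Rightarrow> real" where
  "rho_tot \<rho> x = (\<Sum>i\<in>UNIV. \<rho> i x)"

definition chem_pot :: "('n \<Rightarrow> real^3 \<Rightarrow> real) \<Rightarrow> (real^3 \<Rightarrow> real) \<Rightarrow> 'n \<Rightarrow> real^3 \<Rightarrow> real" where
  "chem_pot \<rho> \<theta> i x = \<theta> x * (ln (\<rho> i x / \<theta> x) + 1)"

definition fricB :: "('n::finite \<Rightarrow> 'n \<Rightarrow> real) \<Rightarrow> ('n \<Rightarrow> real^3 \<Rightarrow> real) \<Rightarrow> real^3 \<Rightarrow> 'n \<Rightarrow> 'n \<Rightarrow> real" where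
  "fricB b \<rho> x i j = (if i = j then (\<Sum>k\<in>UNIV - {i}. b i k * \<rho> k x) else - b i j * \<rho> i x)"

definition is_group_inv :: "('n::finite \<Rightarrow> 'n \<Rightarrow> real) \<Rightarrow> ('n \<Rightarrow> 'n \<Rightarrow> real) \<Rightarrow> ('n \<Rightarrow> real) \<Rightarrow> bool" where
  "is_group_inv B Bs r \<longleftrightarrow>
     (\<forall>i j. (\<Sum>k\<in>UNIV. B i k * Bs k j) = (if i = j then 1 else 0) - r i / (\<Sum>l\<in>UNIV. r l)) \<and>
     (\<forall>i j. (\<Sum>k\<in>UNIV. Bs i k * B k j) = (if i = j then 1 else 0) - r i / (\<Sum>l\<in>UNIV. r l)) \<and>
     (\<forall>i. (\<Sum>j\<in>UNIV. Bs i j * r j) = 0) \<and>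
     (\<forall>i. (\<Sum>j\<in>UNIV. Bs j i) = 0)"

definition drive :: "('n::finite \<Rightarrow> real^3 \<Rightarrow> real) \<Rightarrow> (real^3 \<Rightarrow> real) \<Rightarrow> ('n \<Rightarrow> real) \<Rightarrow> 'n \<Rightarrow> real^3 \<Rightarrow> real^3" where
  "drive \<rho> \<theta> qb i x =
     \<rho> i x *\<^sub>R grad (\<lambda>y. chem_pot \<rho> \<theta> i y / \<theta> y) x
     - (\<rho> i x / (rho_tot \<rho> x * \<theta> x)) *\<^sub>R grad (\<lambda>y. rho_tot \<rho> y * \<theta> y) x
     - (2 * \<rho> i x * \<theta> x) *\<^sub>R grad (\<lambda>y. 1 / \<theta> y) x
     + (qb i * \<rho> i x) *\<^sub>R grad (\<lambda>y. ln (\<theta> y)) x"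

end

theory Submission
  imports Defs
begin

lemma grad_ln_inv:
  fixes \<theta> :: "real^3 \<Rightarrow> real"
  assumes pos: "\<theta> x > 0" and d: "\<theta> differentiable (at x)"
  shows "grad (\<lambda>y. ln (\<theta> y)) x = (- \<theta> x) *\<^sub>R grad (\<lambda>y. 1 / \<theta> y) x"
proof -
  obtain D where D: "(\<theta> has_derivative D) (at x)" using d unfolding differentiable_def by blast
  have h1: "((\<lambda>y. ln (\<theta> y)) has_derivative (\<lambda>v. inverse (\<theta> x) * D v)) (at x)"
    using has_derivative_ln[OF pos D] by (simp add: mult.commute)
  have h2: "((\<lambda>y. inverse (\<theta> y)) has_derivative (\<lambda>v. - (inverse (\<theta> x) * D v * inverse (\<theta> x)))) (at x)"
    using Deriv.has_derivative_inverse[OF _ D] pos by simp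
  have e1: "frechet_derivative (\<lambda>y. ln (\<theta> y)) (at x) = (\<lambda>v. inverse (\<theta> x) * D v)"
    using frechet_derivative_at[OF h1] by simp
  have e2: "frechet_derivative (\<lambda>y. 1 / \<theta> y) (at x) = (\<lambda>v. - (inverse (\<theta> x) * D v * inverse (\<theta> x)))"
    using frechet_derivative_at[OF h2] by (simp add: divide_inverse)
  show ?thesis unfolding grad_def e1 e2
    using pos by (simp add: vec_eq_iff field_simps)
qed

lemma Bs_sym:
  fixes B Bs :: "'n::finite \<Rightarrow> 'n \<Rightarrow> real" and r :: "'n \<Rightarrow> real"
  assumes BsB: "\<forall>i j. (\<Sum>k\<in>UNIV. Bs i k * B k j) = (if i = j then 1 else 0) - r i / R"
    and Bsr: "\<forall>i. (\<Sum>j\<in>UNIV. Bs i j * r j) = 0"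
    and Bsym: "\<forall>k l. r l * B k l = B l k * r k"
  shows "Bs i j * r j = Bs j i * r i"
proof -
  have gen: "(\<Sum>l\<in>UNIV. Bs a l * r l * ((if c = l then 1 else 0) - r c / R)) = Bs a c * r c" for a c
  proof -
    have "(\<Sum>l\<in>UNIV. Bs a l * r l * ((if c = l then 1 else 0) - r c / R))
       = (\<Sum>l\<in>UNIV. (if c = l then Bs a l * r l else 0)) - (r c / R) * (\<Sum>l\<in>UNIV. Bs a l * r l)"
    proof -
      have "\<And>l. Bs a l * r l * ((if c = l then 1 else 0) - r c / R)
          = (if c = l then Bs a l * r l else 0) - (r c / R) * (Bs a l * r l)"
        by (simp add: algebra_simps)
      then show ?thesis by (simp add: sum_subtractf sum_distrib_left)
    qed
    also have "\<dots> = Bs a c * r c" using Bsr by simp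
    finally show ?thesis .
  qed
  have "Bs i j * r j = (\<Sum>l\<in>UNIV. Bs i l * r l * ((if j = l then 1 else 0) - r j / R))"
    using gen by simp
  also have "\<dots> = (\<Sum>l\<in>UNIV. Bs i l * r l * (\<Sum>k\<in>UNIV. Bs j k * B k l))"
    using BsB by simp
  also have "\<dots> = (\<Sum>l\<in>UNIV. \<Sum>k\<in>UNIV. Bs j k * (Bs i l * (r l * B k l)))"
    by (simp add: sum_distrib_left mult_ac)
  also have "\<dots> = (\<Sum>k\<in>UNIV. \<Sum>l\<in>UNIV. Bs j k * (Bs i l * (B l k * r k)))"
    using Bsym by (subst sum.swap) simp
  also have "\<dots> = (\<Sum>k\<in>UNIV. Bs j k * r k * (\<Sum>l\<in>UNIV. Bs i l * B l k))"
    by (simp add: sum_distrib_left mult_ac)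
  also have "\<dots> = (\<Sum>k\<in>UNIV. Bs j k * r k * ((if i = k then 1 else 0) - r i / R))"
    using BsB by simp
  also have "\<dots> = Bs j i * r i"
    using gen by simp
  finally show ?thesis .
qed


theorem proposition2p1:
  fixes \<Omega> :: "(real^3) set"
    and \<rho> :: "'n::finite \<Rightarrow> real^3 \<Rightarrow> real"
    and \<theta> :: "real^3 \<Rightarrow> real"
    and b :: "'n \<Rightarrow> 'n \<Rightarrow> real"
    and Bs :: "real^3 \<Rightarrow> 'n \<Rightarrow> 'n \<Rightarrow> real"
    and qb :: "'n \<Rightarrow> real"
    and J :: "'n \<Rightarrow> real^3 \<Rightarrow> real^3"
  assumes n2: "CARD('n) \<ge> 2"
    and dom: "open \<Omega>" "connected \<Omega>"
    and rho_pos: "\<And>i x. x \<in> \<Omega> \<Longrightarrow> \<rho> i x > 0"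
    and theta_pos: "\<And>x. x \<in> \<Omega> \<Longrightarrow> \<theta> x > 0"
    and rho_diff: "\<And>i x. x \<in> \<Omega> \<Longrightarrow> \<rho> i differentiable (at x)"
    and theta_diff: "\<And>x. x \<in> \<Omega> \<Longrightarrow> \<theta> differentiable (at x)"
    and b_sym: "\<And>i j. b i j = b j i"
    and b_pos: "\<And>i j. i \<noteq> j \<Longrightarrow> b i j > 0"
    and Bs_ginv: "\<And>x. x \<in> \<Omega> \<Longrightarrow> is_group_inv (fricB b \<rho> x) (Bs x) (\<lambda>i. \<rho> i x)"
    and qb_orth: "\<And>x. x \<in> \<Omega> \<Longrightarrow> (\<Sum>i\<in>UNIV. qb i * \<rho> i x) = 0"
    and J_sum: "\<And>x. x \<in> \<Omega> \<Longrightarrow> (\<Sum>i\<in>UNIV. J i x) = 0"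
    and MS: "\<And>i x. x \<in> \<Omega> \<Longrightarrow> drive \<rho> \<theta> qb i x =
              - (\<Sum>j\<in>UNIV. (b i j * \<rho> i x * \<rho> j x) *\<^sub>R (J i x /\<^sub>R \<rho> i x - J j x /\<^sub>R \<rho> j x))"
  shows "\<forall>x\<in>\<Omega>.
    (let P = (\<lambda>k j. (if k = j then 1 else 0) - \<rho> j x / rho_tot \<rho> x);
         M = (\<lambda>i j. \<Sum>k\<in>UNIV. Bs x i k * \<rho> k x * P k j);
         Mv = (\<lambda>i. - \<theta> x * (\<Sum>k\<in>UNIV. Bs x i k * \<rho> k x * qb k))
     in (\<forall>i. J i x = - (\<Sum>j\<in>UNIV. M i j *\<^sub>R grad (\<lambda>y. chem_pot \<rho> \<theta> j y / \<theta> y) x)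
                       - Mv i *\<^sub>R grad (\<lambda>y. 1 / \<theta> y) x)
      \<and> (\<forall>i j. M i j = M j i)
      \<and> (\<forall>j. (\<Sum>i\<in>UNIV. M i j) = 0)
      \<and> (\<Sum>i\<in>UNIV. Mv i) = 0)"
proof (intro ballI)
  fix x assume x: "x \<in> \<Omega>"
  define r where "r = (\<lambda>i. \<rho> i x)"
  define R where "R = rho_tot \<rho> x"
  have R_def': "R = (\<Sum>l\<in>UNIV. r l)" unfolding R_def r_def rho_tot_def by simp
  define B where "B = fricB b \<rho> x"
  define S where "S = Bs x"
  define g where "g = (\<lambda>j. grad (\<lambda>y. chem_pot \<rho> \<theta> j y / \<theta> y) x)"
  define h where "h = grad (\<lambda>y. 1 / \<theta> y) x"
  define G where "G = grad (\<lambda>y. rho_tot \<rho> y * \<theta> y) x"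
  define L where "L = grad (\<lambda>y. ln (\<theta> y)) x"
  define d where "d = (\<lambda>k. drive \<rho> \<theta> qb k x)"
  have rpos: "\<And>i. r i > 0" unfolding r_def using rho_pos[OF x] .
  have gi: "is_group_inv B S r" using Bs_ginv[OF x] unfolding B_def S_def r_def .
  have SB: "\<forall>i j. (\<Sum>k\<in>UNIV. S i k * B k j) = (if i = j then 1 else 0) - r i / R"
    and Sr: "\<forall>i. (\<Sum>j\<in>UNIV. S i j * r j) = 0"
    and Scol: "\<forall>i. (\<Sum>j\<in>UNIV. S j i) = 0"
    using gi unfolding is_group_inv_def R_def' by auto
  have Bsym: "\<forall>k l. r l * B k l = B l k * r k"
    unfolding B_def fricB_def r_def using b_sym by (auto simp: mult_ac)
  have LH: "L = (- \<theta> x) *\<^sub>R h"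
    unfolding L_def h_def using grad_ln_inv[OF theta_pos[OF x] theta_diff[OF x]] .
  have Meq: "(\<Sum>k\<in>UNIV. S i k * r k * ((if k = j then 1 else 0) - r j / R)) = S i j * r j" for i j
  proof -
    have "\<And>l. S i l * r l * ((if l = j then 1 else 0) - r j / R)
        = (if j = l then S i l * r l else 0) - (r j / R) * (S i l * r l)"
      by (simp add: algebra_simps)
    then have "(\<Sum>k\<in>UNIV. S i k * r k * ((if k = j then 1 else 0) - r j / R))
       = (\<Sum>l\<in>UNIV. (if j = l then S i l * r l else 0)) - (r j / R) * (\<Sum>l\<in>UNIV. S i l * r l)"
      by (simp add: sum_subtractf sum_distrib_left)
    also have "\<dots> = S i j * r j" using Sr by simp
    finally show ?thesis .
  qed
  have symm: "S i j * r j = S j i * r i" for i j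
    using Bs_sym[OF SB Sr Bsym] .
  have colsum: "(\<Sum>i\<in>UNIV. S i j * r j) = 0" for j
    using Scol by (simp add: sum_distrib_right[symmetric])
  have Mvsum: "(\<Sum>i\<in>UNIV. - \<theta> x * (\<Sum>k\<in>UNIV. S i k * r k * qb k)) = 0"
  proof -
    have "(\<Sum>i\<in>UNIV. (\<Sum>k\<in>UNIV. S i k * r k * qb k)) = (\<Sum>k\<in>UNIV. (\<Sum>i\<in>UNIV. S i k) * (r k * qb k))"
      by (subst sum.swap) (simp add: sum_distrib_left sum_distrib_right mult_ac)
    also have "\<dots> = 0" using Scol by simp
    finally show ?thesis by (simp add: sum_negf sum_distrib_left[symmetric])
  qed
  have dB: "d k = - (\<Sum>j\<in>UNIV. B k j *\<^sub>R J j x)" for k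
  proof -
    define T where "T = (\<lambda>j. (b k j * r k * r j) *\<^sub>R (J k x /\<^sub>R r k - J j x /\<^sub>R r j))"
    have dT: "d k = - (\<Sum>j\<in>UNIV. T j)" unfolding d_def T_def r_def using MS[OF x] by simp
    have T0: "T k = 0" unfolding T_def by simp
    have Tj: "T j = (b k j * r j) *\<^sub>R J k x + (- b k j * r k) *\<^sub>R J j x" for j
    proof -
      have c1: "b k j * r k * r j * inverse (r k) = b k j * r j" using rpos[of k] by (simp add: field_simps)
      have c2: "b k j * r k * r j * inverse (r j) = b k j * r k" using rpos[of j] by (simp add: field_simps)
      show ?thesis unfolding T_def by (simp add: scaleR_right_diff_distrib c1 c2)
    qed
    have "(\<Sum>j\<in>UNIV. T j) = (\<Sum>j\<in>UNIV-{k}. T j)"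
      using T0 by (simp add: sum.remove[of UNIV k])
    also have "\<dots> = (\<Sum>j\<in>UNIV-{k}. b k j * r j) *\<^sub>R J k x + (\<Sum>j\<in>UNIV-{k}. (- b k j * r k) *\<^sub>R J j x)"
      by (simp add: Tj sum.distrib scaleR_sum_left sum_subtractf sum_negf)
    also have "\<dots> = B k k *\<^sub>R J k x + (\<Sum>j\<in>UNIV-{k}. B k j *\<^sub>R J j x)"
      unfolding B_def fricB_def r_def by (intro arg_cong2[where f="(+)"] sum.cong) auto
    also have "\<dots> = (\<Sum>j\<in>UNIV. B k j *\<^sub>R J j x)"
      by (simp add: sum.remove[of UNIV k])
    finally show ?thesis using dT by simp
  qed
  have JS: "J i x = - (\<Sum>k\<in>UNIV. S i k *\<^sub>R d k)" for i
  proof -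
    have "(\<Sum>k\<in>UNIV. S i k *\<^sub>R d k) = - (\<Sum>k\<in>UNIV. \<Sum>j\<in>UNIV. (S i k * B k j) *\<^sub>R J j x)"
      by (simp add: dB scaleR_sum_right sum_negf)
    also have "\<dots> = - (\<Sum>j\<in>UNIV. (\<Sum>k\<in>UNIV. S i k * B k j) *\<^sub>R J j x)"
      by (subst sum.swap) (simp add: scaleR_sum_left)
    also have "\<dots> = - (\<Sum>j\<in>UNIV. ((if i = j then 1 else 0) - r i / R) *\<^sub>R J j x)"
      using SB by simp
    also have "\<dots> = - (J i x - (r i / R) *\<^sub>R (\<Sum>j\<in>UNIV. J j x))"
    proof -
      have "\<And>j. ((if i = j then 1 else 0) - r i / R) *\<^sub>R J j x
          = (if i = j then J j x else 0) - (r i / R) *\<^sub>R J j x"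
        by (simp add: scaleR_left_diff_distrib)
      then show ?thesis by (simp add: sum_subtractf scaleR_sum_right)
    qed
    also have "\<dots> = - J i x" using J_sum[OF x] by simp
    finally show ?thesis by simp
  qed
  have Jeq: "J i x = - (\<Sum>j\<in>UNIV. (S i j * r j) *\<^sub>R g j)
      - (- \<theta> x * (\<Sum>k\<in>UNIV. S i k * r k * qb k)) *\<^sub>R h" for i
  proof -
    define V where "V = (1 / (R * \<theta> x)) *\<^sub>R G + (2 * \<theta> x) *\<^sub>R h"
    have dk: "S i k *\<^sub>R d k = (S i k * r k) *\<^sub>R g k - (S i k * r k) *\<^sub>R V
        + (S i k * r k * qb k) *\<^sub>R L" for k
      unfolding d_def drive_def V_def g_def G_def h_def L_def R_def r_def
      by (simp add: algebra_simps scaleR_right_diff_distrib scaleR_add_right)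
    have "(\<Sum>k\<in>UNIV. S i k *\<^sub>R d k) = (\<Sum>k\<in>UNIV. (S i k * r k) *\<^sub>R g k)
        - (\<Sum>k\<in>UNIV. S i k * r k) *\<^sub>R V + (\<Sum>k\<in>UNIV. S i k * r k * qb k) *\<^sub>R L"
      by (simp add: dk sum.distrib sum_subtractf scaleR_sum_left)
    also have "\<dots> = (\<Sum>k\<in>UNIV. (S i k * r k) *\<^sub>R g k)
        + (- \<theta> x * (\<Sum>k\<in>UNIV. S i k * r k * qb k)) *\<^sub>R h"
      using Sr LH by simp
    finally show ?thesis using JS[of i] by simp
  qed
  have rr: "\<And>k. \<rho> k x = r k" unfolding r_def by simp
  have gg: "\<And>j. grad (\<lambda>y. chem_pot \<rho> \<theta> j y / \<theta> y) x = g j" unfolding g_def by simp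
  show "let P = (\<lambda>k j. (if k = j then 1 else 0) - \<rho> j x / rho_tot \<rho> x);
         M = (\<lambda>i j. \<Sum>k\<in>UNIV. Bs x i k * \<rho> k x * P k j);
         Mv = (\<lambda>i. - \<theta> x * (\<Sum>k\<in>UNIV. Bs x i k * \<rho> k x * qb k))
     in (\<forall>i. J i x = - (\<Sum>j\<in>UNIV. M i j *\<^sub>R grad (\<lambda>y. chem_pot \<rho> \<theta> j y / \<theta> y) x)
                       - Mv i *\<^sub>R grad (\<lambda>y. 1 / \<theta> y) x)
      \<and> (\<forall>i j. M i j = M j i)
      \<and> (\<forall>j. (\<Sum>i\<in>UNIV. M i j) = 0)
      \<and> (\<Sum>i\<in>UNIV. Mv i) = 0"
    unfolding Let_def
    unfolding S_def[symmetric] R_def[symmetric] h_def[symmetric] rr gg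
    unfolding Meq
    using Jeq symm colsum Mvsum by auto
qed

end
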